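(* The only rational periodic points of $f(x)=x^2-\tfrac{29}{16}$ are $-\tfrac14,-\tfrac74,\tfrac54$, which form a $3$-cycle. In particular $f$ has exactly $8$ rational points that are periodic or preperiodic.
   Context: A point $x$ is preperiodic for $f$ if some iterate $f^k(x)$, $k\ge1$, is periodic while $x$ itself is not periodic. *)

theory Defs
  imports Complex_Main
begin

definition periodic_pt :: "('a \<Rightarrow> 'a) \<Rightarrow> 'a \<Rightarrow> bool" where
  "periodic_pt f x \<longleftrightarrow> (\<exists>n\<ge>1. (f ^^ n) x = x)"

definition preperiodic_pt :: "('a \<Rightarrow> 'a) \<Rightarrow> 'a \<Rightarrow> bool" where
  "preperiodic_pt f x \<longleftrightarrow> (\<exists>k\<ge>1. periodic_pt f ((f ^^ k) x)) \<and> \<not> periodic_pt f x"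

definition fq :: "rat \<Rightarrow> rat" where
  "fq x = x ^ 2 - 29 / 16"

end

theory Submission
  imports Defs
begin

lemma escape_aux:
  fixes m :: "'a \<Rightarrow> 'b::linorder"
  assumes step: "\<And>x. B x \<Longrightarrow> B (f x) \<and> m x < m (f x)"
  shows "B x \<Longrightarrow> B ((f^^n) x) \<and> (n \<ge> 1 \<longrightarrow> m x < m ((f^^n) x))"
proof (induction n)
  case 0 then show ?case by simp
next
  case (Suc n)
  then have "B ((f^^n) x)" and h: "n \<ge> 1 \<longrightarrow> m x < m ((f^^n) x)" by auto
  with step have "B (f ((f^^n) x))" "m ((f^^n) x) < m (f ((f^^n) x))" by auto
  with h show ?case by (cases "n = 0") auto
qed

lemma escape_not_pp:
  fixes m :: "'a \<Rightarrow> 'b::linorder"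
  assumes step: "\<And>x. B x \<Longrightarrow> B (f x) \<and> m x < m (f x)"
    and pp: "periodic_pt f x \<or> preperiodic_pt f x"
  shows "\<not> B x"
proof
  assume Bx: "B x"
  from pp obtain k where per: "periodic_pt f ((f^^k) x)"
    unfolding preperiodic_pt_def by (metis funpow_0)
  have Bk: "B ((f^^k) x)" using escape_aux[OF step Bx] by blast
  from per obtain n where n: "n \<ge> 1" "(f^^n) ((f^^k) x) = (f^^k) x"
    unfolding periodic_pt_def by blast
  from escape_aux[OF step Bk, of n] n show False by simp
qed

lemma closed_not_per:
  assumes C: "\<And>y. y \<in> C \<Longrightarrow> f y \<in> C" and fx: "f x \<in> C" and x: "x \<notin> C"
  shows "\<not> periodic_pt f x"
proof
  assume "periodic_pt f x"
  then obtain n where n: "n \<ge> 1" "(f^^n) x = x" unfolding periodic_pt_def by blast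
  have "\<And>m. (f^^m) (f x) \<in> C"
  proof -
    fix m show "(f^^m) (f x) \<in> C" by (induction m) (auto simp: fx C)
  qed
  moreover obtain m where "n = Suc m" using n by (cases n) auto
  ultimately have "(f^^n) x \<in> C" by (simp add: funpow_Suc_right del: funpow.simps)
  with n x show False by simp
qed

definition den :: "rat \<Rightarrow> int" where "den y = snd (quotient_of y)"

lemma den_pos: "den y > 0"
  unfolding den_def by (metis prod.collapse quotient_of_denom_pos)

lemma den_grow:
  assumes "den y > 1"
  shows "den ((y^2 - 29)/4) > den y"
proof -
  obtain n d where nd: "quotient_of y = (n, d)" by (cases "quotient_of y")
  have y: "y = of_int n / of_int d" using quotient_of_div[OF nd] .
  have d: "d > 0" using quotient_of_denom_pos[OF nd] .
  have cop: "coprime n d" using quotient_of_coprime[OF nd] .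
  have dd: "den y = d" using nd by (simp add: den_def)
  obtain p q where pq: "quotient_of ((y^2 - 29)/4) = (p, q)" by (cases "quotient_of ((y^2 - 29)/4)")
  have gy: "(y^2 - 29)/4 = of_int p / of_int q" using quotient_of_div[OF pq] .
  have q: "q > 0" using quotient_of_denom_pos[OF pq] .
  have dq: "den ((y^2 - 29)/4) = q" using pq by (simp add: den_def)
  have "(of_int n / of_int d)^2 - 29 = 4 * (of_int p / of_int q :: rat)"
    using gy y by (simp add: field_simps)
  then have "(of_int n)^2 * of_int q - 29 * (of_int d)^2 * of_int q = (4 * of_int p * (of_int d)^2 :: rat)"
    using d q by (simp add: field_simps power2_eq_square)
  then have eq: "n^2 * q - 29 * d^2 * q = 4 * p * d^2"
    by (metis (mono_tags, opaque_lifting) of_int_eq_iff of_int_mult of_int_diff of_int_power of_int_numeral)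
  have "q * n^2 = d^2 * (4 * p + 29 * q)" using eq by (simp add: algebra_simps)
  then have "d^2 dvd q * n^2" by (metis dvd_triv_left)
  moreover have "coprime (d^2) (n^2)" using cop by (simp add: coprime_commute)
  ultimately have "d^2 dvd q" by (simp add: coprime_dvd_mult_left_iff)
  then have "d^2 \<le> q" using q by (simp add: zdvd_imp_le)
  moreover have "d < d^2" using assms dd by (simp add: power2_eq_square)
  ultimately show ?thesis using dd dq by simp
qed

definition good :: "rat \<Rightarrow> bool" where "good y \<longleftrightarrow> (\<exists>a. odd a \<and> y = of_int a)"

lemma int_den: "den (of_int a) = 1"
  by (simp add: den_def)

lemma den1: "den y = 1 \<Longrightarrow> \<exists>a. y = of_int a"
  unfolding den_def by (metis Fract_of_int_quotient of_int_1 div_by_1 prod.collapse quotient_of_div)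

lemma bad_step:
  assumes "\<not> good y"
  shows "\<not> good ((y^2 - 29)/4) \<and> den y < den ((y^2 - 29)/4)"
proof -
  have gr: "den y < den ((y^2 - 29)/4)"
  proof (cases "den y > 1")
    case True then show ?thesis by (rule den_grow)
  next
    case False
    with den_pos[of y] have "den y = 1" by simp
    then obtain a where a: "y = of_int a" using den1 by blast
    with assms have ev: "even a" unfolding good_def by blast
    obtain p q where pq: "quotient_of ((y^2 - 29)/4) = (p, q)" by (cases "quotient_of ((y^2 - 29)/4)")
    have gy: "(y^2 - 29)/4 = of_int p / of_int q" using quotient_of_div[OF pq] .
    have q: "q > 0" using quotient_of_denom_pos[OF pq] .
    have dq: "den ((y^2 - 29)/4) = q" using pq by (simp add: den_def)
    have "q \<noteq> 1"
    proof
      assume "q = 1"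
      with gy a have "(of_int a)^2 - 29 = (of_int (4*p) :: rat)" by (simp add: field_simps)
      then have "a^2 - 29 = 4 * p"
        by (metis (mono_tags, opaque_lifting) of_int_eq_iff of_int_diff of_int_power of_int_numeral)
      moreover obtain k where "a = 2*k" using ev by blast
      ultimately have "4*k^2 - 29 = 4*p" by (simp add: power2_eq_square)
      then show False by presburger
    qed
    with q \<open>den y = 1\<close> dq show ?thesis by simp
  qed
  moreover have "\<not> good ((y^2 - 29)/4)"
  proof
    assume "good ((y^2 - 29)/4)"
    then obtain b where "(y^2 - 29)/4 = of_int b" unfolding good_def by blast
    with gr int_den[of b] den_pos[of y] show False by simp
  qed
  ultimately show ?thesis by simp
qed

lemma good_step:
  assumes "good y" shows "good ((y^2 - 29)/4)"
proof -
  obtain a where a: "odd a" "y = of_int a" using assms good_def by blast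
  then obtain k where k: "a = 2*k+1" by (metis oddE)
  have "(y^2 - 29)/4 = of_int (k^2 + k - 7)"
    using a k by (simp add: field_simps power2_eq_square)
  moreover have "odd (k^2 + k - 7)" by (simp add: power2_eq_square)
  ultimately show ?thesis unfolding good_def by blast
qed

lemma fq4: "4 * fq x = ((4*x)^2 - 29)/4"
  by (simp add: fq_def field_simps power2_eq_square)

lemma pp_good:
  assumes "periodic_pt fq x \<or> preperiodic_pt fq x"
  shows "good (4*x)"
proof -
  have "\<not> (\<not> good (4*x))"
  proof (rule escape_not_pp[where m = "\<lambda>x. den (4*x)", OF _ assms])
    fix z assume "\<not> good (4*z)"
    then show "\<not> good (4 * fq z) \<and> den (4*z) < den (4 * fq z)"
      unfolding fq4 by (rule bad_step)
  qed
  then show ?thesis by simp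
qed

lemma pp_small:
  assumes "periodic_pt fq x \<or> preperiodic_pt fq x"
  shows "\<not> (\<bar>x\<bar> \<ge> 2)"
proof (rule escape_not_pp[where m = "abs", OF _ assms])
  fix z :: rat assume z: "\<bar>z\<bar> \<ge> 2"
  have "z^2 = \<bar>z\<bar> * \<bar>z\<bar>" by (simp add: power2_eq_square)
  moreover have "\<bar>z\<bar> * \<bar>z\<bar> \<ge> 2 * \<bar>z\<bar>" by (rule mult_right_mono[OF z]) simp
  ultimately have "fq z \<ge> \<bar>z\<bar> + 3/16" using z unfolding fq_def by linarith
  then show "2 \<le> \<bar>fq z\<bar> \<and> \<bar>z\<bar> < \<bar>fq z\<bar>" using z by linarith
qed

lemma pp_subset:
  assumes "periodic_pt fq x \<or> preperiodic_pt fq x"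
  shows "x \<in> {-1/4, -7/4, 5/4, 1/4, 7/4, -5/4, 3/4, -3/4}"
proof -
  obtain a where a: "odd a" "4*x = of_int a" using pp_good[OF assms] good_def by blast
  have "\<bar>x\<bar> < 2" using pp_small[OF assms] by simp
  then have "\<bar>of_int a\<bar> < (8::rat)" using a by linarith
  then have "\<bar>a\<bar> < 8" by (metis of_int_abs of_int_less_iff of_int_numeral)
  then have "a = -7 \<or> a = -5 \<or> a = -3 \<or> a = -1 \<or> a = 1 \<or> a = 3 \<or> a = 5 \<or> a = 7" using a(1) by presburger
  moreover have "x = of_int a / 4" using a by simp
  ultimately show ?thesis by (auto simp: field_simps)
qed

lemma cyc: "fq (-1/4) = -7/4" "fq (-7/4) = 5/4" "fq (5/4) = -1/4"
  by (simp_all add: fq_def power2_eq_square)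
lemmas fqs = fq_def power2_eq_square

lemma per3: "x \<in> {-1/4, -7/4, 5/4} \<Longrightarrow> periodic_pt fq x"
  unfolding periodic_pt_def
  by (rule exI[of _ 3]) (elim insertE emptyE; hypsubst; simp add: numeral_eq_Suc fqs)

definition C3 :: "rat set" where "C3 = {-1/4, -7/4, 5/4}"
definition C4 :: "rat set" where "C4 = {-1/4, -7/4, 5/4, -5/4}"

lemma C3cl: "y \<in> C3 \<Longrightarrow> fq y \<in> C3" unfolding C3_def by (elim insertE emptyE; hypsubst; simp add: fqs)
lemma C4cl: "y \<in> C4 \<Longrightarrow> fq y \<in> C4" unfolding C4_def by (elim insertE emptyE; hypsubst; simp add: fqs)

lemma notper:
  "\<not> periodic_pt fq (1/4)" "\<not> periodic_pt fq (7/4)" "\<not> periodic_pt fq (-5/4)"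
  "\<not> periodic_pt fq (3/4)" "\<not> periodic_pt fq (-3/4)"
  apply (rule closed_not_per[OF C3cl]; simp add: C3_def fqs)
  apply (rule closed_not_per[OF C3cl]; simp add: C3_def fqs)
  apply (rule closed_not_per[OF C3cl]; simp add: C3_def fqs)
  apply (rule closed_not_per[OF C4cl]; simp add: C4_def fqs)
  apply (rule closed_not_per[OF C4cl]; simp add: C4_def fqs)
  done

lemma pp1: "periodic_pt fq (fq x) \<Longrightarrow> periodic_pt fq x \<or> preperiodic_pt fq x"
proof -
  assume h: "periodic_pt fq (fq x)"
  have "(fq^^1) x = fq x" by simp
  then show ?thesis unfolding preperiodic_pt_def using h by (metis order_refl)
qed

lemma ppk: "k \<ge> 1 \<Longrightarrow> (fq^^k) x = y \<Longrightarrow> periodic_pt fq y \<Longrightarrow> periodic_pt fq x \<or> preperiodic_pt fq x"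
  unfolding preperiodic_pt_def by blast

lemma in_pp:
  assumes "x \<in> {-1/4, -7/4, 5/4, 1/4, 7/4, -5/4, 3/4, -3/4}"
  shows "periodic_pt fq x \<or> preperiodic_pt fq x"
proof -
  have p3: "periodic_pt fq (-1/4)" "periodic_pt fq (-7/4)" "periodic_pt fq (5/4)"
    by (auto intro: per3)
  have a: "periodic_pt fq (1/4) \<or> preperiodic_pt fq (1/4)"
    apply (rule ppk[of 1 _ "-7/4"]) apply simp apply (simp add: fqs numeral_eq_Suc) by (rule p3(2))
  have b: "periodic_pt fq (7/4) \<or> preperiodic_pt fq (7/4)"
    apply (rule ppk[of 1 _ "5/4"]) apply simp apply (simp add: fqs numeral_eq_Suc) by (rule p3(3))
  have c: "periodic_pt fq (-5/4) \<or> preperiodic_pt fq (-5/4)"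
    apply (rule ppk[of 1 _ "-1/4"]) apply simp apply (simp add: fqs numeral_eq_Suc) by (rule p3(1))
  have d: "periodic_pt fq (3/4) \<or> preperiodic_pt fq (3/4)"
    apply (rule ppk[of 2 _ "-1/4"]) apply simp apply (simp add: fqs numeral_eq_Suc) by (rule p3(1))
  have e: "periodic_pt fq (-3/4) \<or> preperiodic_pt fq (-3/4)"
    apply (rule ppk[of 2 _ "-1/4"]) apply simp apply (simp add: fqs numeral_eq_Suc) by (rule p3(1))
  show ?thesis using assms p3 a b c d e by (elim insertE emptyE; hypsubst; blast)
qed

theorem corollary4:
  shows "{x. periodic_pt fq x} = {-1/4, -7/4, 5/4}
    \<and> fq (-1/4) = -7/4 \<and> fq (-7/4) = 5/4 \<and> fq (5/4) = -1/4
    \<and> card {x. periodic_pt fq x \<or> preperiodic_pt fq x} = 8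
    \<and> finite {x. periodic_pt fq x \<or> preperiodic_pt fq x}"
proof -
  have S: "{x. periodic_pt fq x \<or> preperiodic_pt fq x} = {-1/4, -7/4, 5/4, 1/4, 7/4, -5/4, 3/4, -3/4}"
    using pp_subset in_pp by blast
  have P: "{x. periodic_pt fq x} = {-1/4, -7/4, 5/4}"
  proof
    show "{x. periodic_pt fq x} \<subseteq> {-1/4, -7/4, 5/4}"
    proof
      fix x assume "x \<in> {x. periodic_pt fq x}"
      then have "periodic_pt fq x" by simp
      moreover then have "x \<in> {-1/4, -7/4, 5/4, 1/4, 7/4, -5/4, 3/4, -3/4}"
        using pp_subset by blast
      ultimately show "x \<in> {-1/4, -7/4, 5/4}" using notper by (metis empty_iff insert_iff)
    qed
    show "{-1/4, -7/4, 5/4} \<subseteq> {x. periodic_pt fq x}" using per3 by blast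
  qed
  show ?thesis unfolding S P by (simp add: fqs)
qed

end
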